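(* Let $t$ be a positive integer and let $G$ be a graph on $4t-1$ vertices with $\alpha(G)=2$. If $\mathrm{cm}(G)\le t-1$, then $\omega(G)\le t-4$.
   Context: All graphs are finite and simple. $\alpha(G)$ is the independence number and $\omega(G)$ the clique number. A matching $M$ in $G$ is connected if for every two edges of $M$ there is an edge of $G$ joining an endpoint of one to an endpoint of the other; $\mathrm{cm}(G)$ is the maximum size of a connected matching in $G$. *)

theory Defs
  imports Main
begin

definition graph :: "'a set \<Rightarrow> ('a \<Rightarrow> 'a \<Rightarrow> bool) \<Rightarrow> bool" where
  "graph V E \<longleftrightarrow> finite V \<and> (\<forall>x y. E x y \<longrightarrow> E y x) \<and> (\<forall>x. \<not> E x x)
     \<and> (\<forall>x y. E x y \<longrightarrow> x \<in> V \<and> y \<in> V)"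

definition clique :: "'a set \<Rightarrow> ('a \<Rightarrow> 'a \<Rightarrow> bool) \<Rightarrow> 'a set \<Rightarrow> bool" where
  "clique V E K \<longleftrightarrow> K \<subseteq> V \<and> (\<forall>x\<in>K. \<forall>y\<in>K. x \<noteq> y \<longrightarrow> E x y)"

definition indep_set :: "'a set \<Rightarrow> ('a \<Rightarrow> 'a \<Rightarrow> bool) \<Rightarrow> 'a set \<Rightarrow> bool" where
  "indep_set V E S \<longleftrightarrow> S \<subseteq> V \<and> (\<forall>x\<in>S. \<forall>y\<in>S. \<not> E x y)"

definition clique_number :: "'a set \<Rightarrow> ('a \<Rightarrow> 'a \<Rightarrow> bool) \<Rightarrow> nat" where
  "clique_number V E = Max (card ` {K. clique V E K})"

definition independence_number :: "'a set \<Rightarrow> ('a \<Rightarrow> 'a \<Rightarrow> bool) \<Rightarrow> nat" where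
  "independence_number V E = Max (card ` {S. indep_set V E S})"

text \<open>A matching: a set of edges (as ordered pairs, each edge represented once
  by some orientation) with pairwise disjoint endpoint sets.\<close>
definition matching :: "'a set \<Rightarrow> ('a \<Rightarrow> 'a \<Rightarrow> bool) \<Rightarrow> ('a \<times> 'a) set \<Rightarrow> bool" where
  "matching V E M \<longleftrightarrow> (\<forall>(u,v)\<in>M. E u v)
     \<and> (\<forall>e\<in>M. \<forall>f\<in>M. e \<noteq> f \<longrightarrow> {fst e, snd e} \<inter> {fst f, snd f} = {})"

definition connected_matching :: "'a set \<Rightarrow> ('a \<Rightarrow> 'a \<Rightarrow> bool) \<Rightarrow> ('a \<times> 'a) set \<Rightarrow> bool" where
  "connected_matching V E M \<longleftrightarrow> matching V E M \<and>
     (\<forall>e\<in>M. \<forall>f\<in>M. e \<noteq> f \<longrightarrow> (\<exists>x\<in>{fst e, snd e}. \<exists>y\<in>{fst f, snd f}. E x y))"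

definition cm :: "'a set \<Rightarrow> ('a \<Rightarrow> 'a \<Rightarrow> bool) \<Rightarrow> nat" where
  "cm V E = Max (card ` {M. connected_matching V E M})"

end

theory Submission
  imports Defs
begin

definition mixd :: "('a \<Rightarrow> 'a \<Rightarrow> bool) \<Rightarrow> 'a \<Rightarrow> 'a \<Rightarrow> 'a \<Rightarrow> 'a \<Rightarrow> bool" where
  "mixd E a b c d \<longleftrightarrow> (E a c \<or> E a d \<or> E b c \<or> E b d) \<and> (\<not> E a c \<or> \<not> E a d \<or> \<not> E b c \<or> \<not> E b d)"

lemma greedy:
  assumes "finite S" "\<forall>a\<in>S. finite (A a) \<and> card S \<le> card (A a)"
  shows "\<exists>f. inj_on f S \<and> (\<forall>a\<in>S. f a \<in> A a)"
  using assms
proof (induction S rule: finite_induct)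
  case empty
  then show ?case by auto
next
  case (insert a S)
  have "\<forall>b\<in>S. finite (A b) \<and> card S \<le> card (A b)"
    using insert.prems insert.hyps by auto
  then obtain f where f: "inj_on f S" "\<forall>b\<in>S. f b \<in> A b" using insert.IH by blast
  have c1: "card (f ` S) \<le> card S" by (rule card_image_le) (fact insert.hyps(1))
  have c2: "card S < card (A a)" using insert.prems insert.hyps by auto
  have fa: "finite (A a)" using insert.prems by auto
  have "\<not> A a \<subseteq> f ` S"
  proof
    assume "A a \<subseteq> f ` S"
    hence "card (A a) \<le> card (f ` S)" using card_mono insert.hyps(1) by blast
    thus False using c1 c2 by simp
  qed
  then obtain x where x: "x \<in> A a" "x \<notin> f ` S" by blast
  have "inj_on (f(a := x)) (insert a S)" using f(1) x(2) insert.hyps(2)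
    unfolding inj_on_def by (auto split: if_splits)
  moreover have "\<forall>b\<in>insert a S. (f(a := x)) b \<in> A b" using f(2) x(1) insert.hyps(2) by auto
  ultimately show ?case by blast
qed

lemma card3: "card (A \<union> B \<union> C) \<le> card A + card B + card C"
  using card_Un_le[of "A \<union> B" C] card_Un_le[of A B] by linarith

lemma card_diff_ge: "finite A \<Longrightarrow> finite B \<Longrightarrow> card A \<le> card (A - B) + card B"
proof -
  assume "finite A" "finite B"
  have "A \<subseteq> (A - B) \<union> B" by blast
  hence "card A \<le> card ((A - B) \<union> B)" using \<open>finite A\<close> \<open>finite B\<close> by (intro card_mono) auto
  thus ?thesis using card_Un_le[of "A - B" B] by linarith
qed

lemma cliques_finite: "finite V \<Longrightarrow> finite {K. clique V E K}"
  by (rule finite_subset[of _ "Pow V"]) (auto simp: clique_def)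

lemma clique_le_cn: "finite V \<Longrightarrow> clique V E K \<Longrightarrow> card K \<le> clique_number V E"
  unfolding clique_number_def using cliques_finite by (intro Max_ge) auto

lemma clique_ex: "finite V \<Longrightarrow> \<exists>K. clique V E K \<and> card K = clique_number V E"
proof -
  assume "finite V"
  have "{} \<in> {K. clique V E K}" by (simp add: clique_def)
  hence "clique_number V E \<in> card ` {K. clique V E K}" unfolding clique_number_def
    using cliques_finite[OF \<open>finite V\<close>] by (intro Max_in) auto
  thus ?thesis by auto
qed

lemma indep_none:
  assumes "graph V E" "independence_number V E = 2"
   "x\<in>V" "y\<in>V" "z\<in>V" "x\<noteq>y" "x\<noteq>z" "y\<noteq>z" "\<not>E x y" "\<not>E x z" "\<not>E y z"
  shows False
proof -
  have sy: "\<And>a b. E a b \<Longrightarrow> E b a" and ir: "\<And>a. \<not> E a a" and fin: "finite V"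
    using assms(1) unfolding graph_def by blast+
  have "indep_set V E {x,y,z}" unfolding indep_set_def using assms(3-11) sy ir by blast
  moreover have "finite {S. indep_set V E S}"
    by (rule finite_subset[of _ "Pow V"]) (auto simp: indep_set_def fin)
  ultimately have "card {x,y,z} \<le> independence_number V E"
    unfolding independence_number_def by (intro Max_ge) auto
  moreover have "card {x,y,z} = 3" using assms(6-8) by simp
  ultimately show False using assms(2) by simp
qed

lemma cm_ge:
  assumes "graph V E" "connected_matching V E M"
  shows "card M \<le> cm V E"
proof -
  have fin: "finite V" and inV: "\<And>a b. E a b \<Longrightarrow> a \<in> V \<and> b \<in> V"
    using assms(1) unfolding graph_def by blast+
  have "finite {M. connected_matching V E M}"
  proof (rule finite_subset[of _ "Pow (V \<times> V)"])
    show "{M. connected_matching V E M} \<subseteq> Pow (V \<times> V)"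
      using inV by (fastforce simp: connected_matching_def matching_def)
    show "finite (Pow (V \<times> V))" using fin by simp
  qed
  thus ?thesis unfolding cm_def using assms(2) by (intro Max_ge) auto
qed

locale G2 =
  fixes V :: "'a set" and E :: "'a \<Rightarrow> 'a \<Rightarrow> bool" and w :: nat
  assumes fin: "finite V"
    and sym: "E x y \<Longrightarrow> E y x"
    and irr: "\<not> E x x"
    and inV: "E x y \<Longrightarrow> x \<in> V"
    and ind: "\<lbrakk>x\<in>V; y\<in>V; z\<in>V; x\<noteq>y; x\<noteq>z; y\<noteq>z; \<not>E x y; \<not>E x z; \<not>E y z\<rbrakk> \<Longrightarrow> False"
    and cq: "\<lbrakk>K \<subseteq> V; \<And>x y. x\<in>K \<Longrightarrow> y\<in>K \<Longrightarrow> x\<noteq>y \<Longrightarrow> E x y\<rbrakk> \<Longrightarrow> card K \<le> w"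
begin

lemma inV2: "E x y \<Longrightarrow> y \<in> V" using inV sym by blast

lemma mixd_sym: "mixd E a b c d \<Longrightarrow> mixd E c d a b"
  unfolding mixd_def using sym by blast

lemma common_nonnbr_card:
  assumes "S \<subseteq> V" "v \<in> V" "v \<notin> S" "\<And>x. x \<in> S \<Longrightarrow> \<not> E x v"
  shows "card S \<le> w"
proof (rule cq)
  show "S \<subseteq> V" by fact
  fix x y assume "x \<in> S" "y \<in> S" "x \<noteq> y"
  show "E x y"
  proof (rule ccontr)
    assume "\<not> E x y"
    show False using ind[of x y v] assms \<open>x\<in>S\<close> \<open>y\<in>S\<close> \<open>x\<noteq>y\<close> \<open>\<not>E x y\<close> by blast
  qed
qed

lemma nonnbr_card: "a \<in> V \<Longrightarrow> card {x\<in>V. x \<noteq> a \<and> \<not> E a x} \<le> w"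
  by (rule common_nonnbr_card[of _ a]) (auto intro: sym)

lemma D_card: "E y z \<Longrightarrow> card {x\<in>V. \<not> E x y \<and> \<not> E x z} \<le> w"
  by (rule common_nonnbr_card[of _ y]) (auto intro: inV)

lemma notclique: "S \<subseteq> V \<Longrightarrow> w < card S \<Longrightarrow> \<exists>x\<in>S. \<exists>y\<in>S. x\<noteq>y \<and> \<not> E x y"
  using cq[of S] by force

end

context G2
begin
lemma three_edges:
  assumes R: "R \<subseteq> V" and cR: "3*w + 3 \<le> card R"
  shows "\<exists>y1 z1 y2 z2 y3 z3. distinct [y1,z1,y2,z2,y3,z3] \<and> set [y1,z1,y2,z2,y3,z3] \<subseteq> R
     \<and> E y1 z1 \<and> E y2 z2 \<and> E y3 z3
     \<and> mixd E y1 z1 y2 z2 \<and> mixd E y1 z1 y3 z3 \<and> mixd E y2 z2 y3 z3"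
proof -
  have finR: "finite R" using R fin finite_subset by blast
  have "R \<noteq> {}" using cR by auto
  then obtain r where "r \<in> R" by blast
  have w1: "1 \<le> w" using cq[of "{r}"] \<open>r\<in>R\<close> R by auto
  show ?thesis
  proof (cases "\<exists>y\<in>R. \<exists>z\<in>R. \<exists>z2\<in>R. z \<noteq> z2 \<and> y \<noteq> z \<and> y \<noteq> z2 \<and> \<not>E y z \<and> \<not> E y z2")
    case True
    then obtain y z z2 where yz: "y\<in>R" "z\<in>R" "z2\<in>R" "z \<noteq> z2" "y \<noteq> z" "y \<noteq> z2" "\<not>E y z" "\<not> E y z2"
      by blast
    have Ezz2: "E z z2" using ind[of y z z2] yz R by blast
    define T where "T = {x\<in>R. E y x}"
    have finT: "finite T" using finR T_def by simp
    have "R \<subseteq> T \<union> {y} \<union> {x\<in>V. x \<noteq> y \<and> \<not>E y x}" using R T_def by auto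
    hence "card R \<le> card (T \<union> {y} \<union> {x\<in>V. x \<noteq> y \<and> \<not>E y x})"
      by (intro card_mono) (auto simp: finT fin)
    also have "\<dots> \<le> card T + 1 + w"
      using card3[of T "{y}" "{x\<in>V. x \<noteq> y \<and> \<not>E y x}"] nonnbr_card[of y] yz R by auto
    finally have cT: "2*w + 2 \<le> card T" using cR by linarith
    have "\<exists>u v. u\<in>T \<and> v\<in>T \<and> u\<noteq>v \<and> E u z \<and> E v z2 \<and> (\<not>E u z2 \<or> \<not>E v z \<or> \<not>E u v)"
    proof (rule ccontr)
      assume H0: "\<not> ?thesis"
      hence H: "\<And>u v. u\<in>T \<Longrightarrow> v\<in>T \<Longrightarrow> u\<noteq>v \<Longrightarrow> E u z \<Longrightarrow> E v z2 \<Longrightarrow> E u z2 \<and> E v z \<and> E u v"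
        by blast
      define T1 where "T1 = {x\<in>T. E x z}"
      define T2 where "T2 = {x\<in>T. E x z2}"
      have "T \<subseteq> T2 \<union> {x\<in>V. x \<noteq> z2 \<and> \<not>E z2 x}"
      proof
        fix x assume "x \<in> T" thus "x \<in> T2 \<union> {x\<in>V. x \<noteq> z2 \<and> \<not>E z2 x}"
          using T_def T2_def R yz sym[of z2 x] by auto
      qed
      hence "card T \<le> card (T2 \<union> {x\<in>V. x \<noteq> z2 \<and> \<not>E z2 x})"
        by (intro card_mono) (auto simp: finT fin T2_def)
      also have "\<dots> \<le> card T2 + w"
        using card_Un_le[of T2 "{x\<in>V. x \<noteq> z2 \<and> \<not>E z2 x}"] nonnbr_card[of z2] yz R by auto
      finally have cT2: "w + 2 \<le> card T2" using cT by linarith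
      have T1T2: "T1 \<subseteq> T2"
      proof
        fix u assume u: "u \<in> T1"
        have "\<not> T2 \<subseteq> {u}"
        proof
          assume "T2 \<subseteq> {u}"
          hence "card T2 \<le> card {u}" by (intro card_mono) auto
          thus False using cT2 by simp
        qed
        then obtain v where "v \<in> T2" "v \<noteq> u" by blast
        then show "u \<in> T2" using H[of u v] u T1_def T2_def by auto
      qed
      have cT1: "card T1 \<le> w"
      proof (rule cq)
        show "T1 \<subseteq> V" using T1_def T_def R by auto
        fix a b assume "a\<in>T1" "b\<in>T1" "a\<noteq>b"
        then show "E a b" using H[of a b] T1T2 T1_def T2_def by auto
      qed
      have "T \<subseteq> T1 \<union> {x\<in>V. x \<noteq> z \<and> \<not>E z x}"
      proof
        fix x assume "x \<in> T" thus "x \<in> T1 \<union> {x\<in>V. x \<noteq> z \<and> \<not>E z x}"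
          using T_def T1_def R yz sym[of z x] by auto
      qed
      hence "card T \<le> card (T1 \<union> {x\<in>V. x \<noteq> z \<and> \<not>E z x})"
        by (intro card_mono) (auto simp: finT fin T1_def)
      also have "\<dots> \<le> card T1 + w"
        using card_Un_le[of T1 "{x\<in>V. x \<noteq> z \<and> \<not>E z x}"] nonnbr_card[of z] yz R by auto
      finally show False using cT cT1 w1 by linarith
    qed
    then obtain u v where uv: "u\<in>T" "v\<in>T" "u\<noteq>v" "E u z" "E v z2" "\<not>E u z2 \<or> \<not>E v z \<or> \<not>E u v"
      by blast
    have "\<not> T \<subseteq> {u,v}"
    proof
      assume "T \<subseteq> {u,v}"
      hence "card T \<le> card {u,v}" by (intro card_mono) auto
      also have "\<dots> \<le> 2" by (simp add: card_insert_if)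
      finally show False using cT w1 by linarith
    qed
    then obtain x where x: "x\<in>T" "x \<noteq> u" "x\<noteq>v" by blast
    have Tn: "\<And>q. q \<in> T \<Longrightarrow> q \<noteq> y \<and> q \<noteq> z \<and> q \<noteq> z2 \<and> q \<in> R \<and> E y q"
      using T_def yz irr by auto
    have d: "distinct [z,u,y,x,z2,v]" using Tn[OF uv(1)] Tn[OF uv(2)] Tn[OF x(1)] uv x yz by auto
    have s: "set [z,u,y,x,z2,v] \<subseteq> R" using Tn[OF uv(1)] Tn[OF uv(2)] Tn[OF x(1)] yz by auto
    have m1: "mixd E z u y x" unfolding mixd_def using uv(1) T_def yz(7) sym[of y u] sym[of z y] by auto
    have m2: "mixd E z u z2 v" unfolding mixd_def using Ezz2 uv(6) sym[of z v] by blast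
    have m3: "mixd E y x z2 v" unfolding mixd_def using uv(2) T_def yz(8) by auto
    have es: "E z u" "E y x" "E z2 v" using uv(4,5) x(1) T_def sym[of u z] sym[of v z2] by auto
    show ?thesis using d s m1 m2 m3 es by blast
  next
    case False
    hence H: "\<And>y z z2. y\<in>R \<Longrightarrow> z\<in>R \<Longrightarrow> z2\<in>R \<Longrightarrow> z\<noteq>z2 \<Longrightarrow> y\<noteq>z \<Longrightarrow> y\<noteq>z2 \<Longrightarrow> \<not>E y z \<Longrightarrow> E y z2"
      by blast
    have "w < card R" using cR by linarith
    then obtain y z where yz: "y\<in>R" "z\<in>R" "y\<noteq>z" "\<not>E y z" using notclique[of R] R by blast
    have "card R \<le> card (R - {y,z}) + card {y,z}" using card_diff_ge[OF finR, of "{y,z}"] by simp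
    moreover have "card {y,z} \<le> 2" using card_length[of "[y,z]"] by simp
    ultimately have "w < card (R - {y,z})" using cR by linarith
    moreover have "R - {y,z} \<subseteq> V" using R by blast
    ultimately obtain u v where uv: "u\<in>R - {y,z}" "v\<in>R - {y,z}" "u\<noteq>v" "\<not>E u v"
      using notclique[of "R - {y,z}"] by blast
    have "card R \<le> card (R - {y,z,u,v}) + card {y,z,u,v}" using card_diff_ge[OF finR, of "{y,z,u,v}"] by simp
    moreover have "card {y,z,u,v} \<le> 4" using card_length[of "[y,z,u,v]"] by simp
    ultimately have "w < card (R - {y,z,u,v})" using cR w1 by linarith
    moreover have "R - {y,z,u,v} \<subseteq> V" using R by blast
    ultimately obtain p q where pq: "p\<in>R - {y,z,u,v}" "q\<in>R - {y,z,u,v}" "p\<noteq>q" "\<not>E p q"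
      using notclique[of "R - {y,z,u,v}"] by blast
    have e1: "E y u" using H[of y z u] yz uv by blast
    have nzy: "\<not> E z y" using yz(4) sym[of z y] by blast
    have nvu: "\<not> E v u" using uv(4) sym[of v u] by blast
    have e2: "E z p" using H[of z y p] yz pq nzy by blast
    have e3: "E v q" using H[of v u q] uv pq nvu by blast
    have a1: "E y p" using H[of y z p] yz pq by blast
    have a2: "E y v" using H[of y z v] yz uv by blast
    have a3: "E z v" using H[of z y v] yz uv nzy by blast
    have d: "distinct [y,u,z,p,v,q]" using yz uv pq by auto
    have s: "set [y,u,z,p,v,q] \<subseteq> R" using yz uv pq by auto
    have m1: "mixd E y u z p" unfolding mixd_def using a1 yz(4) by blast
    have m2: "mixd E y u v q" unfolding mixd_def using a2 uv(4) by blast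
    have m3: "mixd E z p v q" unfolding mixd_def using a3 pq(4) by blast
    show ?thesis using d s m1 m2 m3 e1 e2 e3 by blast
  qed
qed
end

context G2
begin

lemma assemble:
  assumes K: "finite K" "\<And>x y. x\<in>K \<Longrightarrow> y\<in>K \<Longrightarrow> x\<noteq>y \<Longrightarrow> E x y"
    and f: "inj_on f K" "\<And>a. a\<in>K \<Longrightarrow> E a (f a) \<and> f a \<notin> K \<and> f a \<notin> fst ` F \<and> f a \<notin> snd ` F"
    and F: "finite F" "\<And>e. e\<in>F \<Longrightarrow> E (fst e) (snd e) \<and> fst e \<notin> K \<and> snd e \<notin> K"
      "\<And>e g. e\<in>F \<Longrightarrow> g\<in>F \<Longrightarrow> e\<noteq>g \<Longrightarrow> {fst e, snd e} \<inter> {fst g, snd g} = {}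
          \<and> (\<exists>x\<in>{fst e, snd e}. \<exists>y\<in>{fst g, snd g}. E x y)"
    and c: "\<And>a e. a\<in>K \<Longrightarrow> e\<in>F \<Longrightarrow> E a (fst e) \<or> E a (snd e) \<or> E (f a) (fst e) \<or> E (f a) (snd e)"
  shows "connected_matching V E ((\<lambda>a. (a, f a)) ` K \<union> F)
    \<and> card ((\<lambda>a. (a, f a)) ` K \<union> F) = card K + card F"
proof -
  let ?M1 = "(\<lambda>a. (a, f a)) ` K"
  let ?M = "?M1 \<union> F"
  have edges: "\<forall>(u,v)\<in>?M. E u v"
  proof
    fix p assume "p \<in> ?M"
    then show "case p of (u,v) \<Rightarrow> E u v"
    proof
      assume "p \<in> ?M1" then obtain a where "a\<in>K" "p = (a, f a)" by blast
      then show ?thesis using f(2) by auto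
    next
      assume "p \<in> F" then show ?thesis using F(2)[of p] by (cases p) auto
    qed
  qed
  have pair: "{fst e, snd e} \<inter> {fst g, snd g} = {} \<and> (\<exists>x\<in>{fst e, snd e}. \<exists>y\<in>{fst g, snd g}. E x y)"
    if e: "e \<in> ?M" and g: "g \<in> ?M" and ne: "e \<noteq> g" for e g
  proof (cases "e \<in> ?M1")
    case True
    then obtain a where a: "a\<in>K" "e = (a, f a)" by blast
    show ?thesis
    proof (cases "g \<in> ?M1")
      case True
      then obtain b where b: "b\<in>K" "g = (b, f b)" by blast
      have "a \<noteq> b" using a b ne by auto
      hence "f a \<noteq> f b" using f(1) a b unfolding inj_on_def by blast
      moreover have "f a \<noteq> b" "f b \<noteq> a" using f(2) a b by blast+
      ultimately show ?thesis using a b K(2)[of a b] \<open>a\<noteq>b\<close> by auto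
    next
      case False
      hence gF: "g \<in> F" using g by blast
      have "a \<noteq> fst g" "a \<noteq> snd g" using F(2)[OF gF] a by auto
      moreover have "f a \<noteq> fst g" "f a \<noteq> snd g" using f(2)[OF a(1)] gF by force+
      moreover have "\<exists>x\<in>{fst e, snd e}. \<exists>y\<in>{fst g, snd g}. E x y" using c[OF a(1) gF] a by auto
      ultimately show ?thesis using a by auto
    qed
  next
    case False
    hence eF: "e \<in> F" using e by blast
    show ?thesis
    proof (cases "g \<in> ?M1")
      case True
      then obtain b where b: "b\<in>K" "g = (b, f b)" by blast
      have "b \<noteq> fst e" "b \<noteq> snd e" using F(2)[OF eF] b by auto
      moreover have "f b \<noteq> fst e" "f b \<noteq> snd e" using f(2)[OF b(1)] eF by force+
      moreover have "\<exists>x\<in>{fst e, snd e}. \<exists>y\<in>{fst g, snd g}. E x y"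
        using c[OF b(1) eF] b sym[of b "fst e"] sym[of b "snd e"] sym[of "f b" "fst e"] sym[of "f b" "snd e"]
        by auto
      ultimately show ?thesis using b by auto
    next
      case False
      hence gF: "g \<in> F" using g by blast
      show ?thesis using F(3)[OF eF gF ne] .
    qed
  qed
  have cmM: "connected_matching V E ?M"
    unfolding connected_matching_def matching_def using edges pair by blast
  have inj: "inj_on (\<lambda>a. (a, f a)) K" unfolding inj_on_def by auto
  have c1: "card ?M1 = card K" using card_image[OF inj] .
  have disj: "?M1 \<inter> F = {}" using F(2) by force
  have "card ?M = card ?M1 + card F" using card_Un_disjoint[OF _ F(1) disj] K(1) by simp
  thus ?thesis using cmM c1 by simp
qed

end

context G2
begin

lemma extend:
  assumes K: "K \<subseteq> V" "\<And>x y. x\<in>K \<Longrightarrow> y\<in>K \<Longrightarrow> x\<noteq>y \<Longrightarrow> E x y" "card K = w"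
    and F: "finite F" "\<And>e. e\<in>F \<Longrightarrow> E (fst e) (snd e) \<and> fst e \<in> V - K \<and> snd e \<in> V - K"
    "\<And>e g. e\<in>F \<Longrightarrow> g\<in>F \<Longrightarrow> e\<noteq>g \<Longrightarrow> {fst e, snd e} \<inter> {fst g, snd g} = {} \<and> mixd E (fst e) (snd e) (fst g) (snd g)"
    and cV: "4*w + 2*card F \<le> card V"
  shows "\<exists>M. connected_matching V E M \<and> card M = w + card F"
proof -
  define R where "R = V - K"
  define X where "X = fst ` F \<union> snd ` F"
  have finK: "finite K" using K(1) fin finite_subset by blast
  have finR: "finite R" using fin R_def by simp
  have finX: "finite X" using F(1) X_def by simp
  have cX: "card X \<le> 2 * card F"
    using card_Un_le[of "fst ` F" "snd ` F"] card_image_le[OF F(1), of fst] card_image_le[OF F(1), of snd] unfolding X_def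
    by linarith
  have cRV: "card R = card V - w" using card_Diff_subset[OF finK K(1)] K(3) R_def by simp
  define A where "A a = {x\<in>R. E a x \<and> x \<notin> X \<and> (\<forall>e\<in>F. E a (fst e) \<or> E a (snd e) \<or> E x (fst e) \<or> E x (snd e))}" for a
  have cA: "finite (A a) \<and> card K \<le> card (A a)" if a: "a \<in> K" for a
  proof -
    have aV: "a \<in> V" using a K(1) by blast
    obtain B where B: "card B \<le> w" "finite B"
      "\<And>e. e\<in>F \<Longrightarrow> \<not>E a (fst e) \<Longrightarrow> \<not>E a (snd e) \<Longrightarrow> {x\<in>V. \<not>E x (fst e) \<and> \<not>E x (snd e)} \<subseteq> B"
    proof (cases "\<exists>e\<in>F. \<not>E a (fst e) \<and> \<not>E a (snd e)")
      case True
      then obtain e0 where e0: "e0\<in>F" "\<not>E a (fst e0)" "\<not>E a (snd e0)" by blast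
      have uniq: "e = e0" if ee: "e\<in>F" "\<not>E a (fst e)" "\<not>E a (snd e)" for e
      proof (rule ccontr)
        assume ne: "e \<noteq> e0"
        have dj: "{fst e, snd e} \<inter> {fst e0, snd e0} = {}" and mx: "mixd E (fst e) (snd e) (fst e0) (snd e0)"
          using F(3)[OF ee(1) e0(1) ne] by auto
        obtain p q where pq: "p \<in> {fst e, snd e}" "q \<in> {fst e0, snd e0}" "\<not>E p q"
          using mx unfolding mixd_def by blast
        have "p \<noteq> q" using pq dj by blast
        moreover have "p \<in> V - K" "q \<in> V - K" using pq F(2)[OF ee(1)] F(2)[OF e0(1)] by auto
        moreover have "\<not> E a p" "\<not> E a q" using pq ee e0 by auto
        ultimately show False using ind[of a p q] aV a pq(3) by blast
      qed
      show ?thesis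
      proof (rule that[of "{x\<in>V. \<not>E x (fst e0) \<and> \<not>E x (snd e0)}"])
        show "card {x\<in>V. \<not>E x (fst e0) \<and> \<not>E x (snd e0)} \<le> w" using D_card F(2)[OF e0(1)] by blast
        show "finite {x\<in>V. \<not>E x (fst e0) \<and> \<not>E x (snd e0)}" using fin by simp
        fix e assume "e\<in>F" "\<not>E a (fst e)" "\<not>E a (snd e)"
        then show "{x\<in>V. \<not>E x (fst e) \<and> \<not>E x (snd e)} \<subseteq> {x\<in>V. \<not>E x (fst e0) \<and> \<not>E x (snd e0)}"
          using uniq by blast
      qed
    next
      case False
      show ?thesis by (rule that[of "{}"]) (use False in auto)
    qed
    define N where "N = {x\<in>V. x \<noteq> a \<and> \<not> E a x}"
    have cN: "card N \<le> w" using nonnbr_card[OF aV] N_def by simp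
    have sub: "R \<subseteq> A a \<union> N \<union> X \<union> B"
    proof
      fix x assume xR: "x \<in> R"
      show "x \<in> A a \<union> N \<union> X \<union> B"
      proof (cases "x \<in> A a")
        case True then show ?thesis by blast
      next
        case False
        show ?thesis
        proof (cases "E a x \<and> x \<notin> X")
          case True
          with False xR obtain e where e: "e\<in>F" "\<not>E a (fst e)" "\<not>E a (snd e)" "\<not>E x (fst e)" "\<not>E x (snd e)"
            unfolding A_def by blast
          have "x \<in> B" using B(3)[OF e(1-3)] e(4,5) xR R_def by blast
          then show ?thesis by blast
        next
          case False
          moreover have "x \<noteq> a" using xR a R_def by blast
          ultimately show ?thesis using xR R_def N_def by blast
        qed
      qed
    qed
    have finA: "finite (A a)" using finR A_def by simp
    have finN: "finite N" using fin N_def by simp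
    have "card R \<le> card (A a \<union> N \<union> X \<union> B)"
      using sub finA finN finX B(2) by (intro card_mono) auto
    also have "\<dots> \<le> card (A a) + card N + card X + card B"
      using card_Un_le[of "A a \<union> N \<union> X" B] card3[of "A a" N X] by linarith
    finally have "card R \<le> card (A a) + card N + card X + card B" .
    hence "card K \<le> card (A a)" using cRV cN cX B(1) cV K(3) by linarith
    thus ?thesis using finA by blast
  qed
  have cA': "\<forall>a\<in>K. finite (A a) \<and> card K \<le> card (A a)" using cA by blast
  obtain f where f: "inj_on f K" "\<forall>a\<in>K. f a \<in> A a" using greedy[OF finK cA'] by blast
  have fA: "f a \<in> R \<and> E a (f a) \<and> f a \<notin> X \<and> (\<forall>e\<in>F. E a (fst e) \<or> E a (snd e) \<or> E (f a) (fst e) \<or> E (f a) (snd e))"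
    if "a \<in> K" for a
  proof -
    have "f a \<in> A a" using f(2) that by blast
    thus ?thesis unfolding A_def by simp
  qed
  have "connected_matching V E ((\<lambda>a. (a, f a)) ` K \<union> F)
    \<and> card ((\<lambda>a. (a, f a)) ` K \<union> F) = card K + card F"
  proof (rule assemble)
    show "finite K" by fact
    show "\<And>x y. x\<in>K \<Longrightarrow> y\<in>K \<Longrightarrow> x\<noteq>y \<Longrightarrow> E x y" by (rule K(2))
    show "inj_on f K" by fact
    show "\<And>a. a\<in>K \<Longrightarrow> E a (f a) \<and> f a \<notin> K \<and> f a \<notin> fst ` F \<and> f a \<notin> snd ` F"
    proof -
      fix a assume "a \<in> K"
      from fA[OF this] show "E a (f a) \<and> f a \<notin> K \<and> f a \<notin> fst ` F \<and> f a \<notin> snd ` F"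
        unfolding R_def X_def by blast
    qed
    show "finite F" by fact
    show "\<And>e. e\<in>F \<Longrightarrow> E (fst e) (snd e) \<and> fst e \<notin> K \<and> snd e \<notin> K" using F(2) by blast
    show "\<And>e g. e\<in>F \<Longrightarrow> g\<in>F \<Longrightarrow> e\<noteq>g \<Longrightarrow> {fst e, snd e} \<inter> {fst g, snd g} = {}
          \<and> (\<exists>x\<in>{fst e, snd e}. \<exists>y\<in>{fst g, snd g}. E x y)"
    proof -
      fix e g assume eg: "e\<in>F" "g\<in>F" "e\<noteq>g"
      have "{fst e, snd e} \<inter> {fst g, snd g} = {}" "mixd E (fst e) (snd e) (fst g) (snd g)"
        using F(3)[OF eg] by auto
      moreover have "\<exists>x\<in>{fst e, snd e}. \<exists>y\<in>{fst g, snd g}. E x y"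
        using calculation(2) unfolding mixd_def by auto
      ultimately show "{fst e, snd e} \<inter> {fst g, snd g} = {} \<and> (\<exists>x\<in>{fst e, snd e}. \<exists>y\<in>{fst g, snd g}. E x y)"
        by blast
    qed
    show "\<And>a e. a\<in>K \<Longrightarrow> e\<in>F \<Longrightarrow> E a (fst e) \<or> E a (snd e) \<or> E (f a) (fst e) \<or> E (f a) (snd e)"
      using fA by blast
  qed
  thus ?thesis using K(3) by metis
qed

end

theorem corollary2p6:
  fixes V :: "'a set" and E :: "'a \<Rightarrow> 'a \<Rightarrow> bool" and t :: nat
  assumes "graph V E" and "t \<ge> 1" and "card V = 4 * t - 1"
    and "independence_number V E = 2"
    and "cm V E \<le> t - 1"
  shows "int (clique_number V E) \<le> int t - 4"
proof -
  define w where "w = clique_number V E"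
  have fin: "finite V" and sy: "\<And>x y. E x y \<Longrightarrow> E y x" and ir: "\<And>x. \<not>E x x"
    and iV: "\<And>x y. E x y \<Longrightarrow> x \<in> V \<and> y \<in> V"
    using assms(1) unfolding graph_def by blast+
  interpret G2 V E w
  proof
    show "finite V" by fact
    show "\<And>x y. E x y \<Longrightarrow> E y x" by (rule sy)
    show "\<And>x. \<not> E x x" by (rule ir)
    show "\<And>x y. E x y \<Longrightarrow> x \<in> V" using iV by blast
    show "\<And>x y z. \<lbrakk>x\<in>V; y\<in>V; z\<in>V; x\<noteq>y; x\<noteq>z; y\<noteq>z; \<not>E x y; \<not>E x z; \<not>E y z\<rbrakk> \<Longrightarrow> False"
      using indep_none[OF assms(1) assms(4)] by blast
    show "\<And>K. \<lbrakk>K \<subseteq> V; \<And>x y. x\<in>K \<Longrightarrow> y\<in>K \<Longrightarrow> x\<noteq>y \<Longrightarrow> E x y\<rbrakk> \<Longrightarrow> card K \<le> w"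
    proof -
      fix K assume "K \<subseteq> V" "\<And>x y. x\<in>K \<Longrightarrow> y\<in>K \<Longrightarrow> x\<noteq>y \<Longrightarrow> E x y"
      hence "clique V E K" unfolding clique_def by blast
      thus "card K \<le> w" using clique_le_cn[OF fin] w_def by blast
    qed
  qed
  show ?thesis
  proof (rule ccontr)
    assume "\<not> ?thesis"
    hence tw: "t \<le> w + 3" unfolding w_def by simp
    obtain K0 where K0: "clique V E K0" "card K0 = w" using clique_ex[OF fin] w_def by blast
    have K0V: "K0 \<subseteq> V" and K0c: "\<And>x y. x\<in>K0 \<Longrightarrow> y\<in>K0 \<Longrightarrow> x\<noteq>y \<Longrightarrow> E x y"
      using K0(1) unfolding clique_def by blast+
    have finK0: "finite K0" using K0V fin finite_subset by blast
    have "\<exists>M. connected_matching V E M \<and> card M = t"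
    proof (cases "t \<le> w")
      case True
      obtain K where K: "K \<subseteq> K0" "card K = t"
        using obtain_subset_with_card_n[of t K0] True K0(2) by metis
      have finK: "finite K" using K(1) finK0 finite_subset by blast
      have KV: "K \<subseteq> V" using K(1) K0V by blast
      define A where "A a = {x\<in>V. E a x \<and> x \<notin> K}" for a
      have cA: "\<forall>a\<in>K. finite (A a) \<and> card K \<le> card (A a)"
      proof
        fix a assume a: "a\<in>K"
        have finA: "finite (A a)" using fin A_def by simp
        have "t \<le> card (A a)"
        proof (cases "2*t \<le> w")
          case True
          have "K0 - K \<subseteq> A a" using K0c K(1) a A_def K0V by blast
          hence "card (K0 - K) \<le> card (A a)" using card_mono finA by blast
          moreover have "card (K0 - K) = w - t" using card_Diff_subset[OF finK K(1)] K0(2) K(2) by simp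
          ultimately show ?thesis using True by simp
        next
          case False
          have aV: "a \<in> V" using a KV by blast
          have "V - K \<subseteq> A a \<union> {x\<in>V. x\<noteq>a \<and> \<not>E a x}" using A_def a by auto
          hence "card (V - K) \<le> card (A a \<union> {x\<in>V. x\<noteq>a \<and> \<not>E a x})"
            using finA fin by (intro card_mono) auto
          also have "\<dots> \<le> card (A a) + w"
            using card_Un_le[of "A a" "{x\<in>V. x\<noteq>a \<and> \<not>E a x}"] nonnbr_card[OF aV] by linarith
          finally have "card (V - K) \<le> card (A a) + w" .
          moreover have "card (V - K) = card V - t" using card_Diff_subset[OF finK KV] K(2) by simp
          ultimately show ?thesis using False assms(3) by linarith
        qed
        thus "finite (A a) \<and> card K \<le> card (A a)" using finA K(2) by simp
      qed
      obtain f where f: "inj_on f K" "\<forall>a\<in>K. f a \<in> A a" using greedy[OF finK cA] by blast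
      have "connected_matching V E ((\<lambda>a. (a, f a)) ` K \<union> {})
        \<and> card ((\<lambda>a. (a, f a)) ` K \<union> {}) = card K + card ({} :: ('a \<times> 'a) set)"
      proof (rule assemble)
        show "finite K" by fact
        show "\<And>x y. x\<in>K \<Longrightarrow> y\<in>K \<Longrightarrow> x\<noteq>y \<Longrightarrow> E x y" using K(1) K0c by blast
        show "inj_on f K" by fact
        show "\<And>a. a\<in>K \<Longrightarrow> E a (f a) \<and> f a \<notin> K \<and> f a \<notin> fst ` {} \<and> f a \<notin> snd ` {}"
          using f(2) A_def by blast
      qed auto
      thus ?thesis using K(2) by auto
    next
      case False
      define R where "R = V - K0"
      have cR: "card R = card V - w" using card_Diff_subset[OF finK0 K0V] K0(2) R_def by simp
      have "3*w + 3 \<le> card R" using cR False assms(3) by linarith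
      moreover have "R \<subseteq> V" using R_def by blast
      ultimately obtain y1 z1 y2 z2 y3 z3 where six:
        "distinct [y1,z1,y2,z2,y3,z3]" "set [y1,z1,y2,z2,y3,z3] \<subseteq> R"
        "E y1 z1" "E y2 z2" "E y3 z3"
        "mixd E y1 z1 y2 z2" "mixd E y1 z1 y3 z3" "mixd E y2 z2 y3 z3"
        using three_edges[of R] by blast
      have gen: "\<exists>M. connected_matching V E M \<and> card M = w + card F"
        if FS: "F \<subseteq> {(y1,z1),(y2,z2),(y3,z3)}" and cF: "4*w + 2*card F \<le> card V" for F
      proof (rule extend)
        show "K0 \<subseteq> V" by fact
        show "\<And>x y. x\<in>K0 \<Longrightarrow> y\<in>K0 \<Longrightarrow> x\<noteq>y \<Longrightarrow> E x y" by (rule K0c)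
        show "card K0 = w" by fact
        show "finite F" using FS finite_subset by blast
        show "\<And>e. e\<in>F \<Longrightarrow> E (fst e) (snd e) \<and> fst e \<in> V - K0 \<and> snd e \<in> V - K0"
          using FS six(2-5) R_def by auto
        show "\<And>e g. e\<in>F \<Longrightarrow> g\<in>F \<Longrightarrow> e\<noteq>g \<Longrightarrow> {fst e, snd e} \<inter> {fst g, snd g} = {}
            \<and> mixd E (fst e) (snd e) (fst g) (snd g)"
        proof -
          fix e g assume eg: "e\<in>F" "g\<in>F" "e\<noteq>g"
          have m: "mixd E y2 z2 y1 z1" "mixd E y3 z3 y1 z1" "mixd E y3 z3 y2 z2"
            using six(6-8) mixd_sym by blast+
          show "{fst e, snd e} \<inter> {fst g, snd g} = {} \<and> mixd E (fst e) (snd e) (fst g) (snd g)"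
          proof -
            have e3: "e = (y1,z1) \<or> e = (y2,z2) \<or> e = (y3,z3)" using eg FS by blast
            have g3: "g = (y1,z1) \<or> g = (y2,z2) \<or> g = (y3,z3)" using eg FS by blast
            show ?thesis using e3 g3 eg(3) six(1,6-8) m by (elim disjE) auto
          qed
        qed
        show "4*w + 2*card F \<le> card V" by fact
      qed
      have tm: "t - w = 1 \<or> t - w = 2 \<or> t - w = 3" using False tw by linarith
      moreover have ?thesis if "t - w = 1"
      proof -
        have cF: "card {(y1,z1)} = 1" by simp
        have "4*w + 2*card {(y1,z1)} \<le> card V" using cF that assms(3) False by linarith
        then obtain M where "connected_matching V E M" "card M = w + card {(y1,z1)}"
          using gen[of "{(y1,z1)}"] by blast
        then show ?thesis using cF that False by auto
      qed
      moreover have ?thesis if "t - w = 2"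
      proof -
        have cF: "card {(y1,z1),(y2,z2)} = 2" using six(1) by simp
        have "4*w + 2*card {(y1,z1),(y2,z2)} \<le> card V" using cF that assms(3) False by linarith
        then obtain M where "connected_matching V E M" "card M = w + card {(y1,z1),(y2,z2)}"
          using gen[of "{(y1,z1),(y2,z2)}"] by blast
        then show ?thesis using cF that False by auto
      qed
      moreover have ?thesis if "t - w = 3"
      proof -
        have cF: "card {(y1,z1),(y2,z2),(y3,z3)} = 3" using six(1) by simp
        have "4*w + 2*card {(y1,z1),(y2,z2),(y3,z3)} \<le> card V" using cF that assms(3) False by linarith
        then obtain M where "connected_matching V E M" "card M = w + card {(y1,z1),(y2,z2),(y3,z3)}"
          using gen[of "{(y1,z1),(y2,z2),(y3,z3)}"] by blast
        then show ?thesis using cF that False by auto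
      qed
      ultimately show ?thesis by blast
    qed
    then obtain M where "connected_matching V E M" "card M = t" by blast
    hence "t \<le> cm V E" using cm_ge[OF assms(1)] by metis
    thus False using assms(2,5) by simp
  qed
qed

end
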